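(* Let $w \in \mathfrak{S}_n$ be a prism and let $i \in \textsf{supp}(w)$ be unconfined in the reduced words of $w$, with $i-1 \in \textsf{supp}(w)$ and $i+1 \in \textsf{supp}(w)$. Let $R = \{(a,2) : 0 \le a \le 4\} \cup \{(2,b) : 0 \le b \le 4\}$, $U = \{(a,b) : a \in \{0,1,2\},\ b \in \{3,4\}\}$ and $D = \{(a,b) : a \in \{3,4\},\ b \in \{0,1,2\}\}$. Then $w$ contains at least one of the following calibrated mesh patterns, each with calibration $x_2 = i$ and $y_2 = i$: (a) $(4123, R \cup D)$; (b) $(2341, R \cup U)$; (c) $(3142, R \cup U \cup D)$; (d) $(2413, R \cup U \cup D)$.
   Context: Reduced words, support, Bruhat order: $\sigma_i$ swaps $i,i+1$; a reduced word of $w$ is a minimal-length word $i_1\cdots i_\ell$ with $w=\sigma_{i_1}\cdots\sigma_{i_\ell}$; $\textsf{supp}(w)$ is the set of letters in any reduced word; $u\preceq w$ iff a reduced word of $u$ is a subword of one of $w$; $B(w)=\{u:u\preceq w\}$; $w$ is a prism if $B(w)\cong\mathbf{2}\times X$ for some poset $X$ ($\mathbf{2}$ the two-element chain). A letter $i$ appearing exactly once in a reduced word $s$ is unconfined in $s$ if that occurrence is neither between two $i+1$'s nor between two $i-1$'s; this then holds in all reduced words of $w$. Calibrated mesh patterns: let $p \in \mathfrak{S}_k$ (written in one-line notation) and $M \subseteq \{0,\dots,k\}^2$ (cell $(a,b)$ is the unit square with lower-left corner $(a,b)$ in the grid $[0,k+1]^2$ containing the graph $\{(j,p(j))\}$ of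 $p$). An occurrence of $p$ in $w \in \mathfrak{S}_n$ is a choice of positions $x_1<\cdots<x_k$ such that $w(x_1)\cdots w(x_k)$ is in the same relative order as $p(1)\cdots p(k)$; let $y_1<\cdots<y_k$ be the values $\{w(x_1),\dots,w(x_k)\}$ in increasing order, and set $x_0=y_0=0$, $x_{k+1}=y_{k+1}=n+1$. Such an occurrence is an occurrence of the mesh pattern $(p,M)$ if for every $(a,b)\in M$ there is no $x$ with $x_a < x < x_{a+1}$ and $y_b < w(x) < y_{b+1}$. A calibrated mesh pattern additionally prescribes values for some of the $x_a$ and $y_b$; $w$ contains it if $w$ has an occurrence of $(p,M)$ meeting those prescriptions. *)

theory Defs
  imports "HOL-Combinatorics.Combinatorics" "HOL-Library.Sublist"
begin

definition sigma :: "nat \<Rightarrow> nat \<Rightarrow> nat" where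
  "sigma i = Transposition.transpose i (Suc i)"

definition word_perm :: "nat list \<Rightarrow> nat \<Rightarrow> nat" where
  "word_perm ws = foldr (\<lambda>i f. sigma i \<circ> f) ws id"

definition is_word :: "nat \<Rightarrow> nat list \<Rightarrow> bool" where
  "is_word n ws \<longleftrightarrow> set ws \<subseteq> {1..<n}"

definition reduced_word :: "nat \<Rightarrow> (nat \<Rightarrow> nat) \<Rightarrow> nat list \<Rightarrow> bool" where
  "reduced_word n w ws \<longleftrightarrow> is_word n ws \<and> word_perm ws = w \<and>
     (\<forall>vs. is_word n vs \<and> word_perm vs = w \<longrightarrow> length ws \<le> length vs)"

definition supp :: "nat \<Rightarrow> (nat \<Rightarrow> nat) \<Rightarrow> nat set" where
  "supp n w = (\<Union>{set ws | ws. reduced_word n w ws})"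

definition bruhat_le :: "nat \<Rightarrow> (nat \<Rightarrow> nat) \<Rightarrow> (nat \<Rightarrow> nat) \<Rightarrow> bool" where
  "bruhat_le n u w \<longleftrightarrow> (\<exists>su sw. reduced_word n u su \<and> reduced_word n w sw \<and> subseq su sw)"

definition bruhat_interval :: "nat \<Rightarrow> (nat \<Rightarrow> nat) \<Rightarrow> (nat \<Rightarrow> nat) set" where
  "bruhat_interval n w = {u. u permutes {1..n} \<and> bruhat_le n u w}"

definition partial_order_on_set :: "'a set \<Rightarrow> ('a \<Rightarrow> 'a \<Rightarrow> bool) \<Rightarrow> bool" where
  "partial_order_on_set X le \<longleftrightarrow>
     (\<forall>x\<in>X. le x x) \<and>
     (\<forall>x\<in>X. \<forall>y\<in>X. le x y \<and> le y x \<longrightarrow> x = y) \<and>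
     (\<forall>x\<in>X. \<forall>y\<in>X. \<forall>z\<in>X. le x y \<and> le y z \<longrightarrow> le x z)"

text \<open>w is a prism if B(w) is isomorphic (as a poset, under Bruhat order) to 2 x X for
  some poset X; 2 = {False < True}, product order.  Since B(w) is finite, X may be taken
  with carrier a set of natural numbers.\<close>
definition prism :: "nat \<Rightarrow> (nat \<Rightarrow> nat) \<Rightarrow> bool" where
  "prism n w \<longleftrightarrow> (\<exists>(X :: nat set) (leX :: nat \<Rightarrow> nat \<Rightarrow> bool) (f :: (nat \<Rightarrow> nat) \<Rightarrow> bool \<times> nat).
     partial_order_on_set X leX \<and>
     bij_betw f (bruhat_interval n w) (UNIV \<times> X) \<and>
     (\<forall>u\<in>bruhat_interval n w. \<forall>v\<in>bruhat_interval n w.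
        bruhat_le n u v \<longleftrightarrow> (fst (f u) \<le> fst (f v) \<and> leX (snd (f u)) (snd (f v)))))"

definition unconfined_in :: "nat \<Rightarrow> nat list \<Rightarrow> bool" where
  "unconfined_in i s \<longleftrightarrow> count_list s i = 1 \<and>
     (\<forall>p < length s. s ! p = i \<longrightarrow>
        \<not> (\<exists>a b. a < p \<and> p < b \<and> b < length s \<and> s ! a = Suc i \<and> s ! b = Suc i) \<and>
        \<not> (\<exists>a b. a < p \<and> p < b \<and> b < length s \<and> s ! a = i - 1 \<and> s ! b = i - 1))"

definition contains_cal_mesh ::
  "nat \<Rightarrow> (nat \<Rightarrow> nat) \<Rightarrow> nat list \<Rightarrow> (nat \<times> nat) set \<Rightarrow> (nat \<times> nat) set \<Rightarrow> (nat \<times> nat) set \<Rightarrow> bool" where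
  "contains_cal_mesh n w p M CX CY \<longleftrightarrow> (let k = length p in
     \<exists>x y :: nat \<Rightarrow> nat.
       x 0 = 0 \<and> x (Suc k) = Suc n \<and> y 0 = 0 \<and> y (Suc k) = Suc n \<and>
       (\<forall>j\<in>{1..k}. 1 \<le> x j \<and> x j \<le> n) \<and>
       (\<forall>j\<in>{1..<k}. x j < x (Suc j)) \<and>
       (\<forall>j\<in>{1..k}. \<forall>l\<in>{1..k}. w (x j) < w (x l) \<longleftrightarrow> p ! (j - 1) < p ! (l - 1)) \<and>
       (\<forall>j\<in>{1..<k}. y j < y (Suc j)) \<and>
       y ` {1..k} = (\<lambda>j. w (x j)) ` {1..k} \<and>
       (\<forall>(a, b)\<in>M. \<not> (\<exists>z. x a < z \<and> z < x (Suc a) \<and> y b < w z \<and> w z < y (Suc b))) \<and>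
       (\<forall>(a, v)\<in>CX. x a = v) \<and> (\<forall>(b, v)\<in>CY. y b = v))"

definition meshR :: "(nat \<times> nat) set" where
  "meshR = {(a, 2) | a. a \<le> 4} \<union> {(2, b) | b. b \<le> 4}"

definition meshU :: "(nat \<times> nat) set" where
  "meshU = {(a, b) | a b. a \<in> {0, 1, 2} \<and> b \<in> {3, 4}}"

definition meshD :: "(nat \<times> nat) set" where
  "meshD = {(a, b) | a b. a \<in> {3, 4} \<and> b \<in> {0, 1, 2}}"

end

theory Submission
  imports Defs
begin


definition invs :: "nat \<Rightarrow> (nat \<Rightarrow> nat) \<Rightarrow> (nat \<times> nat) set" where
  "invs n f = {(x, y). 1 \<le> x \<and> x < y \<and> y \<le> n \<and> f x > f y}"

definition ninv :: "nat \<Rightarrow> (nat \<Rightarrow> nat) \<Rightarrow> nat" where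
  "ninv n f = card (invs n f)"

lemma finite_invs: "finite (invs n f)"
  by (rule finite_subset[of _ "{1..n} \<times> {1..n}"]) (auto simp: invs_def)

lemma sigma_permutes: "1 \<le> k \<Longrightarrow> k < n \<Longrightarrow> sigma k permutes {1..n}"
  unfolding sigma_def by (rule permutes_swap_id) auto

lemma word_perm_Nil[simp]: "word_perm [] = id"
  by (simp add: word_perm_def)

lemma word_perm_Cons[simp]: "word_perm (k # ws) = sigma k \<circ> word_perm ws"
  by (simp add: word_perm_def)

lemma word_perm_append: "word_perm (a @ b) = word_perm a \<circ> word_perm b"
  by (induction a) auto

lemma word_perm_permutes: "is_word n ws \<Longrightarrow> word_perm ws permutes {1..n}"
proof (induction ws)
  case Nil show ?case unfolding word_perm_Nil by (rule permutes_id)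
next
  case (Cons k ws)
  then have "1 \<le> k" "k < n" "is_word n ws" by (auto simp: is_word_def)
  have "word_perm ws permutes {1..n}" using Cons.IH \<open>is_word n ws\<close> by blast
  then show ?case unfolding word_perm_Cons by (rule permutes_compose[OF _ sigma_permutes[OF \<open>1 \<le> k\<close> \<open>k < n\<close>]])
qed

lemma sigma_gt_iff:
  assumes "\<not> (u = k \<and> v = Suc k)" "\<not> (u = Suc k \<and> v = k)"
  shows "sigma k u > sigma k v \<longleftrightarrow> u > v"
  using assms
  by (cases "u = k"; cases "u = Suc k"; cases "v = k"; cases "v = Suc k") (auto simp: sigma_def)

lemma toggle_up:
  assumes p: "f permutes {1..n}" and "f a = k" "f b = Suc k" "a < b" and k: "1 \<le> k" "k < n"
  shows "ninv n (sigma k \<circ> f) = Suc (ninv n f)"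
proof -
  have inj: "inj f" using p permutes_inj by blast
  have a: "a \<in> {1..n}"
  proof (rule ccontr)
    assume "a \<notin> {1..n}" then have "f a = a" using permutes_not_in[OF p] by blast
    then show False using \<open>a \<notin> {1..n}\<close> \<open>f a = k\<close> k by simp
  qed
  have b: "b \<in> {1..n}"
  proof (rule ccontr)
    assume "b \<notin> {1..n}" then have "f b = b" using permutes_not_in[OF p] by blast
    then show False using \<open>b \<notin> {1..n}\<close> \<open>f b = Suc k\<close> k by simp
  qed
  note ab = a b
  have "invs n (sigma k \<circ> f) = insert (a, b) (invs n f)"
  proof (intro set_eqI iffI)
    fix z assume z: "z \<in> invs n (sigma k \<circ> f)"
    obtain x y where xy: "z = (x, y)" by force
    show "z \<in> insert (a, b) (invs n f)"
    proof (cases "z = (a, b)")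
      case False
      have xy': "x < y" using z xy by (simp add: invs_def)
      have "\<not> (f x = k \<and> f y = Suc k)"
        using False xy assms(2,3) injD[OF inj] by metis
      moreover have "\<not> (f x = Suc k \<and> f y = k)"
        using xy' assms(2,3,4) injD[OF inj] by (metis less_asym)
      ultimately show ?thesis using z xy sigma_gt_iff[of "f x" k "f y"] by (simp add: invs_def)
    qed simp
  next
    fix z assume z: "z \<in> insert (a, b) (invs n f)"
    obtain x y where xy: "z = (x, y)" by force
    show "z \<in> invs n (sigma k \<circ> f)"
    proof (cases "z = (a, b)")
      case True
      then show ?thesis using xy assms ab by (auto simp: invs_def sigma_def)
    next
      case False
      have z2: "(x, y) \<in> invs n f" using z xy False by auto
      then have xy': "x < y" by (simp add: invs_def)
      have "\<not> (f x = k \<and> f y = Suc k)"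
        using False xy assms(2,3) injD[OF inj] by metis
      moreover have "\<not> (f x = Suc k \<and> f y = k)"
        using xy' assms(2,3,4) injD[OF inj] by (metis less_asym)
      ultimately show ?thesis using z2 xy sigma_gt_iff[of "f x" k "f y"] by (simp add: invs_def)
    qed
  qed
  moreover have "(a, b) \<notin> invs n f" using assms by (auto simp: invs_def)
  ultimately show ?thesis unfolding ninv_def using finite_invs by simp
qed

lemma toggle_down:
  assumes p: "f permutes {1..n}" and k: "1 \<le> k" "k < n" and "f a = k" "f b = Suc k" "b < a"
  shows "Suc (ninv n (sigma k \<circ> f)) = ninv n f"
proof -
  let ?g = "sigma k \<circ> f"
  have g: "?g permutes {1..n}" by (rule permutes_compose[OF p sigma_permutes[OF k]])
  have "?g b = k" "?g a = Suc k" using assms by (auto simp: sigma_def)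
  from toggle_up[OF g this \<open>b < a\<close> k] have "ninv n (sigma k \<circ> ?g) = Suc (ninv n ?g)" .
  moreover have "sigma k \<circ> ?g = f" by (simp add: sigma_def fun_eq_iff)
  ultimately show ?thesis by simp
qed

lemma ninv_step:
  assumes p: "f permutes {1..n}" and k: "1 \<le> k" "k < n"
  shows "ninv n (sigma k \<circ> f) \<le> Suc (ninv n f)"
    and "ninv n (sigma k \<circ> f) = Suc (ninv n f) \<Longrightarrow> inv f k < inv f (Suc k)"
proof -
  have s: "surj f" using p permutes_surj by blast
  have fa: "f (inv f k) = k" "f (inv f (Suc k)) = Suc k" using s by (simp_all add: surj_f_inv_f)
  have ne: "inv f k \<noteq> inv f (Suc k)" using fa by (metis n_not_Suc_n)
  show "ninv n (sigma k \<circ> f) \<le> Suc (ninv n f)"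
  proof (cases "inv f k < inv f (Suc k)")
    case True then show ?thesis using toggle_up[OF p fa _ k] by simp
  next
    case False then have "inv f (Suc k) < inv f k" using ne by simp
    then show ?thesis using toggle_down[OF p k fa] by simp
  qed
  show "inv f k < inv f (Suc k)" if "ninv n (sigma k \<circ> f) = Suc (ninv n f)"
  proof (rule ccontr)
    assume "\<not> inv f k < inv f (Suc k)"
    then have "inv f (Suc k) < inv f k" using ne by simp
    then show False using toggle_down[OF p k fa] that by simp
  qed
qed

lemma ninv_word: "is_word n ws \<Longrightarrow> ninv n (word_perm ws) \<le> length ws"
proof (induction ws)
  case Nil
  have "invs n id = {}" by (auto simp: invs_def)
  then show ?case by (simp add: ninv_def id_def)
next
  case (Cons k ws)
  then have k: "1 \<le> k" "k < n" and iw: "is_word n ws" by (auto simp: is_word_def)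
  have ih: "ninv n (word_perm ws) \<le> length ws" using Cons.IH iw by blast
  have st: "ninv n (sigma k \<circ> word_perm ws) \<le> Suc (ninv n (word_perm ws))"
    by (rule ninv_step(1)[OF word_perm_permutes[OF iw] k])
  have "ninv n (word_perm (k # ws)) = ninv n (sigma k \<circ> word_perm ws)" by (simp only: word_perm_Cons)
  then show ?case using ih st by (simp only: length_Cons)
qed

lemma descent_between:
  fixes f :: "nat \<Rightarrow> nat"
  shows "k < m \<Longrightarrow> f k > f m \<Longrightarrow> \<exists>j. k \<le> j \<and> j < m \<and> f j > f (Suc j)"
proof (induction m)
  case 0 then show ?case by simp
next
  case (Suc m)
  show ?case
  proof (cases "f m > f (Suc m)")
    case True then show ?thesis using Suc.prems by (intro exI[of _ m]) auto
  next
    case False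
    have km: "k < m" using Suc.prems False by (cases "k = m") auto
    moreover have "f k > f m" using False Suc.prems by simp
    ultimately obtain j where "k \<le> j" "j < m" "f j > f (Suc j)" using Suc.IH by blast
    then show ?thesis by (intro exI[of _ j]) auto
  qed
qed

lemma descent_exists:
  assumes p: "g permutes {1..n}" and "g \<noteq> id"
  shows "\<exists>j. 1 \<le> j \<and> j < n \<and> g j > g (Suc j)"
proof -
  have inj: "inj g" using p permutes_inj by blast
  have ex: "\<exists>x. g x \<noteq> x" using assms by (auto simp: fun_eq_iff)
  define k where "k = (LEAST x. g x \<noteq> x)"
  have gk: "g k \<noteq> k" unfolding k_def using ex by (rule LeastI_ex)
  have below: "g j = j" if "j < k" for j using that not_less_Least unfolding k_def by blast
  have kin: "k \<in> {1..n}" using gk permutes_not_in[OF p] by blast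
  have "g k > k"
  proof (rule ccontr)
    assume "\<not> g k > k"
    then have "g k < k" using gk by simp
    then have "g (g k) = g k" using below by simp
    then show False using inj gk unfolding inj_def by blast
  qed
  obtain m where m: "g m = k" using p permutes_surj by (metis surjD)
  have "m \<noteq> k" using m gk by auto
  moreover have "\<not> m < k" using below m \<open>g k > k\<close> by (metis less_irrefl_nat)
  ultimately have "k < m" by simp
  have "m \<in> {1..n}" using m permutes_not_in[OF p] \<open>k < m\<close> by (metis less_irrefl_nat)
  obtain j where j: "k \<le> j" "j < m" "g j > g (Suc j)"
    using descent_between[of k m g] \<open>k < m\<close> \<open>g k > k\<close> m by auto
  show ?thesis using kin \<open>m \<in> {1..n}\<close> j by (intro exI[of _ j]) auto
qed

lemma exists_word:
  "f permutes {1..n} \<Longrightarrow> \<exists>ws. is_word n ws \<and> word_perm ws = f \<and> length ws = ninv n f"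
proof (induction "ninv n f" arbitrary: f rule: less_induct)
  case less
  show ?case
  proof (cases "f = id")
    case True
    have "invs n id = {}" by (auto simp: invs_def)
    then show ?thesis using True by (intro exI[of _ "[]"]) (simp add: ninv_def is_word_def)
  next
    case False
    have ip: "inv f permutes {1..n}" using less.prems permutes_inv by blast
    have "inv f \<noteq> id" using False
      by (metis inv_id inv_inv_eq less.prems permutes_bij)
    then obtain j where j: "1 \<le> j" "j < n" "inv f j > inv f (Suc j)"
      using descent_exists[OF ip] by blast
    have s: "surj f" using less.prems permutes_surj by blast
    have fa: "f (inv f j) = j" "f (inv f (Suc j)) = Suc j" using s by (simp_all add: surj_f_inv_f)
    have d: "Suc (ninv n (sigma j \<circ> f)) = ninv n f"
      using toggle_down[OF less.prems j(1,2) fa j(3)] .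
    have gp: "sigma j \<circ> f permutes {1..n}" by (rule permutes_compose[OF less.prems sigma_permutes[OF j(1,2)]])
    obtain ws where ws: "is_word n ws" "word_perm ws = sigma j \<circ> f" "length ws = ninv n (sigma j \<circ> f)"
      using less.hyps[OF _ gp] d by auto
    have "sigma j \<circ> (sigma j \<circ> f) = f" by (simp add: sigma_def fun_eq_iff)
    then show ?thesis using ws j d
      by (intro exI[of _ "j # ws"]) (auto simp: is_word_def)
  qed
qed

lemma reduced_tight:
  assumes "reduced_word n w ws"
  shows "ninv n w = length ws" and "is_word n ws" and "word_perm ws = w" and "w permutes {1..n}"
proof -
  show iw: "is_word n ws" and wp: "word_perm ws = w" using assms by (auto simp: reduced_word_def)
  show p: "w permutes {1..n}" using word_perm_permutes[OF iw] wp by simp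
  obtain vs where "is_word n vs" "word_perm vs = w" "length vs = ninv n w"
    using exists_word[OF p] by blast
  then have "length ws \<le> ninv n w" using assms by (auto simp: reduced_word_def)
  moreover have "ninv n w \<le> length ws" using ninv_word[OF iw] wp by simp
  ultimately show "ninv n w = length ws" by simp
qed

definition cross :: "nat \<Rightarrow> (nat \<Rightarrow> nat) \<Rightarrow> bool" where
  "cross j f \<longleftrightarrow> (\<exists>x y. x < y \<and> f x > j \<and> f y \<le> j)"

lemma tight_cross:
  "is_word n t \<Longrightarrow> ninv n (word_perm t) = length t \<Longrightarrow> j \<in> set t \<Longrightarrow> cross j (word_perm t)"
proof (induction t)
  case Nil then show ?case by simp
next
  case (Cons k r)
  have k: "1 \<le> k" "k < n" and r: "is_word n r" using Cons.prems by (auto simp: is_word_def)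
  define f where "f = word_perm r"
  have p: "f permutes {1..n}" unfolding f_def by (rule word_perm_permutes[OF r])
  have le: "ninv n f \<le> length r" unfolding f_def by (rule ninv_word[OF r])
  have eq: "ninv n (sigma k \<circ> f) = Suc (length r)" using Cons.prems(2) by (simp only: f_def word_perm_Cons length_Cons)
  have st: "ninv n (sigma k \<circ> f) \<le> Suc (ninv n f)" using ninv_step(1)[OF p k] .
  have eq2: "ninv n f = length r" using le eq st by linarith
  have lt: "inv f k < inv f (Suc k)" by (rule ninv_step(2)[OF p k]) (simp only: eq eq2)
  have s: "surj f" using p permutes_surj by blast
  have fa: "f (inv f k) = k" "f (inv f (Suc k)) = Suc k" by (simp_all only: surj_f_inv_f[OF s])
  have wk: "word_perm (k # r) = sigma k \<circ> f" by (simp only: word_perm_Cons f_def)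
  have "cross j (sigma k \<circ> f)"
  proof (cases "k = j")
    case True
    have "(sigma k \<circ> f) (inv f k) = Suc k" "(sigma k \<circ> f) (inv f (Suc k)) = k"
      using fa by (simp_all add: sigma_def)
    then have "inv f k < inv f (Suc k) \<and> (sigma k \<circ> f) (inv f k) > j \<and> (sigma k \<circ> f) (inv f (Suc k)) \<le> j"
      using lt True by simp
    then show ?thesis unfolding cross_def by blast
  next
    case False
    then have "j \<in> set r" using Cons.prems by simp
    then have c: "cross j f" using Cons.IH r eq2 f_def by simp
    have iff1: "sigma k v > j \<longleftrightarrow> v > j" for v using False
      by (auto simp: sigma_def transpose_def)
    have iff2: "sigma k v \<le> j \<longleftrightarrow> v \<le> j" for v using False
      by (auto simp: sigma_def transpose_def)
    obtain x y where xy: "x < y" "j < f x" "f y \<le> j" using c[unfolded cross_def] by blast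
    have "x < y \<and> (sigma k \<circ> f) x > j \<and> (sigma k \<circ> f) y \<le> j"
      using xy iff1[of "f x"] iff2[of "f y"] by simp
    then show ?thesis unfolding cross_def by blast
  qed
  then show ?case unfolding wk .
qed

lemma supp_cross:
  assumes "j \<in> supp n w"
  shows "cross j w" "1 \<le> j" "j < n"
proof -
  obtain ws where ws: "reduced_word n w ws" "j \<in> set ws" using assms by (auto simp: supp_def)
  note t = reduced_tight[OF ws(1)]
  show "cross j w" using tight_cross[OF t(2)] t(1,3) ws(2) by simp
  show "1 \<le> j" "j < n" using t(2) ws(2) by (auto simp: is_word_def)
qed



lemma four_eq: "{1..4::nat} = {1,2,3,4}" "{1..<4::nat} = {1,2,3}" by auto

lemma cal4I:
  fixes x y :: "nat \<Rightarrow> nat" and P :: "nat list"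
  assumes "length P = 4"
  and "x 0 = 0" "x (Suc 4) = Suc n" "y 0 = 0" "y (Suc 4) = Suc n"
  and "1 \<le> x 1" "x 1 < x 2" "x 2 < x 3" "x 3 < x 4" "x 4 \<le> n"
  and "\<forall>j\<in>{1,2,3,4}. \<forall>l\<in>{1,2,3,4}. w (x j) < w (x l) \<longleftrightarrow> P ! (j - 1) < P ! (l - 1)"
  and "y 1 < y 2" "y 2 < y 3" "y 3 < y 4"
  and "{y 1, y 2, y 3, y 4} = {w (x 1), w (x 2), w (x 3), w (x 4)}"
  and "\<And>a b. (a, b) \<in> M \<Longrightarrow> \<not> (\<exists>z. x a < z \<and> z < x (Suc a) \<and> y b < w z \<and> w z < y (Suc b))"
  and "x 2 = i" "y 2 = i"
  shows "contains_cal_mesh n w P M {(2, i)} {(2, i)}"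
proof -
  have xs: "\<forall>j\<in>{1..4}. 1 \<le> x j \<and> x j \<le> n" using assms(6-10) unfolding four_eq by auto
  have xm: "\<forall>j\<in>{1..<4}. x j < x (Suc j)" using assms(7-9) unfolding four_eq
    by (auto simp: numeral_eq_Suc)
  have ym: "\<forall>j\<in>{1..<4}. y j < y (Suc j)" using assms(12-14) unfolding four_eq
    by (auto simp: numeral_eq_Suc)
  have yi: "y ` {1..4} = (\<lambda>j. w (x j)) ` {1..4}" using assms(15) unfolding four_eq by simp
  have ord: "\<forall>j\<in>{1..4}. \<forall>l\<in>{1..4}. w (x j) < w (x l) \<longleftrightarrow> P ! (j - 1) < P ! (l - 1)"
    using assms(11) unfolding four_eq .
  have mm: "\<forall>(a, b)\<in>M. \<not> (\<exists>z. x a < z \<and> z < x (Suc a) \<and> y b < w z \<and> w z < y (Suc b))"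
    using assms(16) by blast
  show ?thesis unfolding contains_cal_mesh_def Let_def assms(1)
    apply (rule exI[of _ x], rule exI[of _ y])
    apply (intro conjI)
    apply (rule assms(2))
    apply (rule assms(3))
    apply (rule assms(4))
    apply (rule assms(5))
    apply (rule xs)
    apply (rule xm)
    apply (rule ord)
    apply (rule ym)
    apply (rule yi)
    apply (rule mm)
    using assms(17,18) by auto
qed

locale ctx4 =
  fixes n i p q :: nat and w :: "nat \<Rightarrow> nat"
  assumes inj: "inj w" and surj: "surj w" and outside: "\<And>x. x \<notin> {1..n} \<Longrightarrow> w x = x"
    and i2: "2 \<le> i" and ilt: "Suc i < n"
    and pi: "p \<le> i" and qi: "i < q"
    and wp: "i < w p" and wq: "w q \<le> i"
    and F1: "\<And>x. x \<le> i \<Longrightarrow> x \<noteq> p \<Longrightarrow> w x \<le> i"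
    and F2: "\<And>x. i < x \<Longrightarrow> x \<noteq> q \<Longrightarrow> i < w x"
begin

lemma p1: "1 \<le> p"
proof (rule ccontr)
  assume "\<not> 1 \<le> p" then have "p = 0" by simp
  then have "w p = p" using outside by simp
  then show False using wp \<open>p = 0\<close> by simp
qed

lemma qn: "q \<le> n"
proof (rule ccontr)
  assume "\<not> q \<le> n" then have "w q = q" using outside by simp
  then show False using wq qi by simp
qed

lemma G1: "z \<le> i \<Longrightarrow> i < w z \<Longrightarrow> z = p" using F1 by force
lemma G2: "i < z \<Longrightarrow> w z \<le> i \<Longrightarrow> z = q" using F2 by force

lemma weq: "w x = w y \<longleftrightarrow> x = y" using inj by (auto dest: injD)

lemma le_n: "w r \<le> n \<Longrightarrow> r \<le> n"
proof (rule ccontr)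
  assume "w r \<le> n" "\<not> r \<le> n"
  then have "w r = r" using outside by simp
  then show False using \<open>w r \<le> n\<close> \<open>\<not> r \<le> n\<close> by simp
qed

lemma cellR2: "x a = i \<Longrightarrow> x (Suc a) = Suc i \<Longrightarrow>
   \<not> (\<exists>z. x a < z \<and> z < x (Suc a) \<and> A < w z \<and> w z < B)" by auto
lemma cellR1: "y b = i \<Longrightarrow> y (Suc b) = Suc i \<Longrightarrow>
   \<not> (\<exists>z. A < z \<and> z < B \<and> y b < w z \<and> w z < y (Suc b))" by auto
lemma cellD:
  assumes "Suc i \<le> A" "B' \<le> Suc i" "\<not> (A < q \<and> q < B)"
  shows "\<not> (\<exists>z. A < z \<and> z < B \<and> C < w z \<and> w z < B')"
proof
  assume "\<exists>z. A < z \<and> z < B \<and> C < w z \<and> w z < B'"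
  then obtain z where z: "A < z" "z < B" "w z < B'" by blast
  have "i < z" using z assms by simp
  moreover have "w z \<le> i" using z assms by simp
  ultimately have "z = q" by (rule G2)
  then show False using z assms by simp
qed
lemma cellU:
  assumes "A' \<le> Suc i" "Suc i \<le> C" "\<not> (A < p \<and> p < A')"
  shows "\<not> (\<exists>z. A < z \<and> z < A' \<and> C < w z \<and> w z < B)"
proof
  assume "\<exists>z. A < z \<and> z < A' \<and> C < w z \<and> w z < B"
  then obtain z where z: "A < z" "z < A'" "C < w z" by blast
  have "z \<le> i" using z assms by simp
  moreover have "i < w z" using z assms by simp
  ultimately have "z = p" by (rule G1)
  then show False using z assms by simp
qed

lemma pat_a:
  assumes A: "w q = i" "q = Suc i" "p \<noteq> i" "w p \<noteq> Suc i"
  shows "contains_cal_mesh n w [4,1,2,3] (meshR \<union> meshD) {(2, i)} {(2, i)}"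
proof -
  obtain r where r: "w r = Suc i" using surj by (metis surjD)
  have "r \<noteq> p" using r A by auto
  then have "\<not> r \<le> i" using F1 r by force
  moreover have "r \<noteq> q" using r A by auto
  ultimately have rgt: "Suc i < r" using A by simp
  have rn: "r \<le> n" using le_n r ilt by simp
  have wi: "w i < i"
  proof -
    have "w i \<le> i" using F1 A by simp
    moreover have "w i \<noteq> i" using A weq by (metis n_not_Suc_n)
    ultimately show ?thesis by simp
  qed
  have wpgt: "Suc i < w p" using wp A by simp
  have pl: "p < i" using pi A by simp
  have ws: "w (Suc i) = i" using A by simp
  define x where "x = (\<lambda>j::nat. [0, p, i, Suc i, r, Suc n] ! j)"
  define y where "y = (\<lambda>j::nat. [0, w i, i, Suc i, w p, Suc n] ! j)"
  have x: "x 0 = 0" "x 1 = p" "x 2 = i" "x 3 = Suc i" "x 4 = r" "x (Suc 4) = Suc n" "x (Suc 0) = p"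
    by (simp_all add: x_def)
  have y: "y 0 = 0" "y 1 = w i" "y 2 = i" "y 3 = Suc i" "y 4 = w p" "y (Suc 4) = Suc n" "y (Suc 0) = w i"
    by (simp_all add: y_def)
  show ?thesis
  proof (rule cal4I[where x=x and y=y])
    show "\<forall>j\<in>{1,2,3,4}. \<forall>l\<in>{1,2,3,4}. w (x j) < w (x l) \<longleftrightarrow> [4,1,2,3::nat] ! (j - 1) < [4,1,2,3::nat] ! (l - 1)"
      using wi wpgt by (simp add: x r ws)
    show "{y 1, y 2, y 3, y 4} = {w (x 1), w (x 2), w (x 3), w (x 4)}"
      by (simp add: x y r ws insert_commute)
  next
    fix a b assume ab: "(a, b) \<in> meshR \<union> meshD"
    then have "(a = 2 \<and> b \<le> 4) \<or> (b = 2 \<and> a \<le> 4) \<or> ((a = 3 \<or> a = 4) \<and> b \<le> 2)"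
      unfolding meshR_def meshD_def by auto
    then consider "a = 2" | "b = 2" | "a = 3" "b \<le> 2" | "a = 4" "b \<le> 2" by blast
    then show "\<not> (\<exists>z. x a < z \<and> z < x (Suc a) \<and> y b < w z \<and> w z < y (Suc b))"
    proof cases
      case 1 then show ?thesis using cellR2[of x a] x by simp
    next
      case 2 then show ?thesis using cellR1[of y b] y by simp
    next
      case 3
      have "y (Suc b) \<le> Suc i" using 3 y wi by (auto simp: le_Suc_eq numeral_eq_Suc)
      then show ?thesis using 3 cellD[of "x 3" "y (Suc b)" "x 4"] x rgt A by simp
    next
      case 4
      have "y (Suc b) \<le> Suc i" using 4 y wi by (auto simp: le_Suc_eq numeral_eq_Suc)
      then show ?thesis using 4 cellD[of "x 4" "y (Suc b)" "x 5"] x rgt A by simp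
    qed
  qed (use x y wi wpgt pl p1 rgt rn in simp_all)
qed

lemma pat_b:
  assumes A: "p = i" "w p = Suc i" "w q \<noteq> i" "q \<noteq> Suc i"
  shows "contains_cal_mesh n w [2,3,4,1] (meshR \<union> meshU) {(2, i)} {(2, i)}"
proof -
  obtain r where r: "w r = i" using surj by (metis surjD)
  have "r \<noteq> q" using r A by auto
  then have "\<not> i < r" using F2 r by force
  moreover have "r \<noteq> p" using r A by auto
  ultimately have rl: "r < i" using A by simp
  have r1: "1 \<le> r"
  proof (rule ccontr)
    assume "\<not> 1 \<le> r" then have "r = 0" by simp
    then have "w r = 0" using outside by simp
    then show False using r i2 by simp
  qed
  have wsi: "Suc i < w (Suc i)"
  proof -
    have "i < w (Suc i)" using F2 A by simp
    moreover have "w (Suc i) \<noteq> Suc i" using A weq by (metis n_not_Suc_n)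
    ultimately show ?thesis by simp
  qed
  have wql: "w q < i" using wq A by simp
  have qg: "Suc i < q" using qi A by simp
  have wi: "w i = Suc i" using A by simp
  define x where "x = (\<lambda>j::nat. [0, r, i, Suc i, q, Suc n] ! j)"
  define y where "y = (\<lambda>j::nat. [0, w q, i, Suc i, w (Suc i), Suc n] ! j)"
  have x: "x 0 = 0" "x 1 = r" "x 2 = i" "x 3 = Suc i" "x 4 = q" "x (Suc 4) = Suc n" "x (Suc 0) = r"
    by (simp_all add: x_def)
  have y: "y 0 = 0" "y 1 = w q" "y 2 = i" "y 3 = Suc i" "y 4 = w (Suc i)" "y (Suc 4) = Suc n" "y (Suc 0) = w q"
    by (simp_all add: y_def)
  show ?thesis
  proof (rule cal4I[where x=x and y=y])
    show "\<forall>j\<in>{1,2,3,4}. \<forall>l\<in>{1,2,3,4}. w (x j) < w (x l) \<longleftrightarrow> [2,3,4,1::nat] ! (j - 1) < [2,3,4,1::nat] ! (l - 1)"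
      using wsi wql by (simp add: x r wi)
    show "{y 1, y 2, y 3, y 4} = {w (x 1), w (x 2), w (x 3), w (x 4)}"
      by (simp add: x y r wi insert_commute)
  next
    fix a b assume ab: "(a, b) \<in> meshR \<union> meshU"
    then have "(a = 2 \<and> b \<le> 4) \<or> (b = 2 \<and> a \<le> 4) \<or> (a < 2 \<and> 3 \<le> b \<and> b \<le> 4)"
      unfolding meshR_def meshU_def by auto
    then consider "a = 2" | "b = 2" | "a < 2" "3 \<le> b" "b \<le> 4" by blast
    then show "\<not> (\<exists>z. x a < z \<and> z < x (Suc a) \<and> y b < w z \<and> w z < y (Suc b))"
    proof cases
      case 1 then show ?thesis using cellR2[of x a] x by simp
    next
      case 2 then show ?thesis using cellR1[of y b] y by simp
    next
      case 3
      have xa: "x (Suc a) \<le> Suc i" "\<not> (x a < p \<and> p < x (Suc a))"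
        using 3 x rl A by (auto simp: less_Suc_eq numeral_eq_Suc)
      have "Suc i \<le> y b" using 3 y wsi by (auto simp: le_Suc_eq numeral_eq_Suc)
      then show ?thesis using cellU[OF xa(1) _ xa(2)] by simp
    qed
  qed (use x y wsi wql rl r1 qg qn in simp_all)
qed

lemma pat_c:
  assumes A: "w p = Suc i" "w q = i" "p \<noteq> i" "q \<noteq> Suc i"
  shows "contains_cal_mesh n w [3,1,4,2] (meshR \<union> meshU \<union> meshD) {(2, i)} {(2, i)}"
proof -
  have wi: "w i < i"
  proof -
    have "w i \<le> i" using F1 A by simp
    moreover have "w i \<noteq> i" using A weq qi by (metis less_irrefl_nat)
    ultimately show ?thesis by simp
  qed
  have wsi: "Suc i < w (Suc i)"
  proof -
    have "i < w (Suc i)" using F2 A by simp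
    moreover have "w (Suc i) \<noteq> Suc i" using A weq pi by (metis Suc_n_not_le_n)
    ultimately show ?thesis by simp
  qed
  have qg: "Suc i < q" using qi A by simp
  have pl: "p < i" using pi A by simp
  define x where "x = (\<lambda>j::nat. [0, p, i, Suc i, q, Suc n] ! j)"
  define y where "y = (\<lambda>j::nat. [0, w i, i, Suc i, w (Suc i), Suc n] ! j)"
  have x: "x 0 = 0" "x 1 = p" "x 2 = i" "x 3 = Suc i" "x 4 = q" "x (Suc 4) = Suc n" "x (Suc 0) = p"
    by (simp_all add: x_def)
  have y: "y 0 = 0" "y 1 = w i" "y 2 = i" "y 3 = Suc i" "y 4 = w (Suc i)" "y (Suc 4) = Suc n" "y (Suc 0) = w i"
    by (simp_all add: y_def)
  show ?thesis
  proof (rule cal4I[where x=x and y=y])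
    show "\<forall>j\<in>{1,2,3,4}. \<forall>l\<in>{1,2,3,4}. w (x j) < w (x l) \<longleftrightarrow> [3,1,4,2::nat] ! (j - 1) < [3,1,4,2::nat] ! (l - 1)"
      using wsi wi by (simp add: x A)
    show "{y 1, y 2, y 3, y 4} = {w (x 1), w (x 2), w (x 3), w (x 4)}"
      by (simp add: x y A insert_commute)
  next
    fix a b assume ab: "(a, b) \<in> meshR \<union> meshU \<union> meshD"
    then have "(a = 2 \<and> b \<le> 4) \<or> (b = 2 \<and> a \<le> 4) \<or> (a < 2 \<and> 3 \<le> b \<and> b \<le> 4) \<or> ((a = 3 \<or> a = 4) \<and> b \<le> 2)"
      unfolding meshR_def meshU_def meshD_def by auto
    then consider "a = 2" | "b = 2" | "a < 2" "3 \<le> b" "b \<le> 4" | "a = 3" "b \<le> 2" | "a = 4" "b \<le> 2" by blast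
    then show "\<not> (\<exists>z. x a < z \<and> z < x (Suc a) \<and> y b < w z \<and> w z < y (Suc b))"
    proof cases
      case 1 then show ?thesis using cellR2[of x a] x by simp
    next
      case 2 then show ?thesis using cellR1[of y b] y by simp
    next
      case 3
      have xa: "x (Suc a) \<le> Suc i" "\<not> (x a < p \<and> p < x (Suc a))"
        using 3 x pl by (auto simp: less_Suc_eq numeral_eq_Suc)
      have "Suc i \<le> y b" using 3 y wsi by (auto simp: le_Suc_eq numeral_eq_Suc)
      then show ?thesis using cellU[OF xa(1) _ xa(2)] by simp
    next
      case 4
      have "y (Suc b) \<le> Suc i" using 4 y wi by (auto simp: le_Suc_eq numeral_eq_Suc)
      then show ?thesis using 4 cellD[of "x 3" "y (Suc b)" "x 4"] x qg by simp
    next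
      case 5
      have "y (Suc b) \<le> Suc i" using 5 y wi by (auto simp: le_Suc_eq numeral_eq_Suc)
      then show ?thesis using 5 cellD[of "x 4" "y (Suc b)" "x 5"] x qg by simp
    qed
  qed (use x y wsi wi pl p1 qg qn in simp_all)
qed

lemma pat_d:
  assumes A: "p = i" "q = Suc i" "w p \<noteq> Suc i" "w q \<noteq> i"
  shows "contains_cal_mesh n w [2,4,1,3] (meshR \<union> meshU \<union> meshD) {(2, i)} {(2, i)}"
proof -
  obtain r where r: "w r = i" using surj by (metis surjD)
  have "r \<noteq> q" using r A by auto
  then have "\<not> i < r" using F2 r by force
  moreover have "r \<noteq> p" using r A wp by auto
  ultimately have rl: "r < i" using A by simp
  have r1: "1 \<le> r"
  proof (rule ccontr)
    assume "\<not> 1 \<le> r" then have "r = 0" by simp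
    then have "w r = 0" using outside by simp
    then show False using r i2 by simp
  qed
  obtain s where s: "w s = Suc i" using surj by (metis surjD)
  have "s \<noteq> p" using s A by auto
  then have "\<not> s \<le> i" using F1 s by force
  moreover have "s \<noteq> q" using s wq by auto
  ultimately have sg: "Suc i < s" using A by simp
  have sn: "s \<le> n" using le_n s ilt by simp
  have wpg: "Suc i < w p" using wp A by simp
  have wql: "w q < i" using wq A by simp
  have wi: "w i = w p" "w (Suc i) = w q" using A by simp_all
  define x where "x = (\<lambda>j::nat. [0, r, i, Suc i, s, Suc n] ! j)"
  define y where "y = (\<lambda>j::nat. [0, w q, i, Suc i, w p, Suc n] ! j)"
  have x: "x 0 = 0" "x 1 = r" "x 2 = i" "x 3 = Suc i" "x 4 = s" "x (Suc 4) = Suc n" "x (Suc 0) = r"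
    by (simp_all add: x_def)
  have y: "y 0 = 0" "y 1 = w q" "y 2 = i" "y 3 = Suc i" "y 4 = w p" "y (Suc 4) = Suc n" "y (Suc 0) = w q"
    by (simp_all add: y_def)
  show ?thesis
  proof (rule cal4I[where x=x and y=y])
    show "\<forall>j\<in>{1,2,3,4}. \<forall>l\<in>{1,2,3,4}. w (x j) < w (x l) \<longleftrightarrow> [2,4,1,3::nat] ! (j - 1) < [2,4,1,3::nat] ! (l - 1)"
      using wpg wql by (simp add: x r s wi)
    show "{y 1, y 2, y 3, y 4} = {w (x 1), w (x 2), w (x 3), w (x 4)}"
      by (simp add: x y r s wi insert_commute)
  next
    fix a b assume ab: "(a, b) \<in> meshR \<union> meshU \<union> meshD"
    then have "(a = 2 \<and> b \<le> 4) \<or> (b = 2 \<and> a \<le> 4) \<or> (a < 2 \<and> 3 \<le> b \<and> b \<le> 4) \<or> ((a = 3 \<or> a = 4) \<and> b \<le> 2)"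
      unfolding meshR_def meshU_def meshD_def by auto
    then consider "a = 2" | "b = 2" | "a < 2" "3 \<le> b" "b \<le> 4" | "a = 3" "b \<le> 2" | "a = 4" "b \<le> 2" by blast
    then show "\<not> (\<exists>z. x a < z \<and> z < x (Suc a) \<and> y b < w z \<and> w z < y (Suc b))"
    proof cases
      case 1 then show ?thesis using cellR2[of x a] x by simp
    next
      case 2 then show ?thesis using cellR1[of y b] y by simp
    next
      case 3
      have xa: "x (Suc a) \<le> Suc i" "\<not> (x a < p \<and> p < x (Suc a))"
        using 3 x rl A by (auto simp: less_Suc_eq numeral_eq_Suc)
      have "Suc i \<le> y b" using 3 y wpg by (auto simp: le_Suc_eq numeral_eq_Suc)
      then show ?thesis using cellU[OF xa(1) _ xa(2)] by simp
    next
      case 4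
      have "y (Suc b) \<le> Suc i" using 4 y wql by (auto simp: le_Suc_eq numeral_eq_Suc)
      then show ?thesis using 4 cellD[of "x 3" "y (Suc b)" "x 4"] x sg A by simp
    next
      case 5
      have "y (Suc b) \<le> Suc i" using 5 y wql by (auto simp: le_Suc_eq numeral_eq_Suc)
      then show ?thesis using 5 cellD[of "x 4" "y (Suc b)" "x 5"] x sg A by simp
    qed
  qed (use x y wpg wql rl r1 sg sn in simp_all)
qed

lemma E1:
  assumes "q = Suc i" "w p = Suc i" shows "\<not> cross (Suc i) w"
proof
  assume "cross (Suc i) w"
  then obtain x y where xy: "x < y" "Suc i < w x" "w y \<le> Suc i" unfolding cross_def by blast
  show False
  proof (cases "y \<le> Suc i")
    case True
    then have "x \<le> i" using xy by simp
    moreover have "i < w x" using xy by simp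
    ultimately have "x = p" by (rule G1)
    then show False using xy assms by simp
  next
    case False
    then have "y \<noteq> q" using assms by simp
    then have "i < w y" using F2 False by simp
    then have "w y = w p" using xy assms by simp
    then have "y = p" using weq by simp
    then show False using False pi by simp
  qed
qed

lemma E2:
  assumes "p = i" "w q = i" shows "\<not> cross (i - 1) w"
proof
  assume "cross (i - 1) w"
  then obtain x y where xy: "x < y" "i - 1 < w x" "w y \<le> i - 1" unfolding cross_def by blast
  have yi: "y \<le> i"
  proof (rule ccontr)
    assume "\<not> y \<le> i"
    then have "i < y" by simp
    show False
    proof (cases "y = q")
      case True then show False using xy assms i2 by simp
    next
      case False then have "i < w y" using F2 \<open>i < y\<close> by simp
      then show False using xy by simp
    qed
  qed
  have "y \<noteq> i" using xy assms wp i2 by auto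
  then have "x \<noteq> p" using xy yi assms by simp
  then have "w x \<le> i" using F1 xy yi by simp
  then have "w x = w q" using xy assms i2 by simp
  then have "x = q" using weq by simp
  then show False using xy yi qi by simp
qed

lemma main4:
  assumes "q = Suc i \<or> w p = Suc i" "p = i \<or> w q = i" "cross (Suc i) w" "cross (i - 1) w"
  shows "contains_cal_mesh n w [4,1,2,3] (meshR \<union> meshD) {(2, i)} {(2, i)} \<or>
         contains_cal_mesh n w [2,3,4,1] (meshR \<union> meshU) {(2, i)} {(2, i)} \<or>
         contains_cal_mesh n w [3,1,4,2] (meshR \<union> meshU \<union> meshD) {(2, i)} {(2, i)} \<or>
         contains_cal_mesh n w [2,4,1,3] (meshR \<union> meshU \<union> meshD) {(2, i)} {(2, i)}"
proof -
  have n1: "\<not> (q = Suc i \<and> w p = Suc i)" using E1 assms(3) by blast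
  have n2: "\<not> (p = i \<and> w q = i)" using E2 assms(4) by blast
  show ?thesis
  proof (cases "q = Suc i")
    case True
    then have c1: "w p \<noteq> Suc i" using n1 by blast
    show ?thesis
    proof (cases "p = i")
      case True
      then have "w q \<noteq> i" using n2 by blast
      then show ?thesis using pat_d \<open>q = Suc i\<close> True c1 by blast
    next
      case False
      then have "w q = i" using assms(2) by blast
      then show ?thesis using pat_a \<open>q = Suc i\<close> False c1 by blast
    qed
  next
    case False
    then have c1: "w p = Suc i" using assms(1) by blast
    show ?thesis
    proof (cases "p = i")
      case True
      then have "w q \<noteq> i" using n2 by blast
      then show ?thesis using pat_b \<open>q \<noteq> Suc i\<close> True c1 by blast
    next
      case False
      then have "w q = i" using assms(2) by blast
      then show ?thesis using pat_c \<open>q \<noteq> Suc i\<close> False c1 by blast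
    qed
  qed
qed

end

lemma word_perm_pres:
  assumes "\<And>k x. k \<in> set ws \<Longrightarrow> Q (sigma k x) = Q x"
  shows "Q (word_perm ws x) = Q x"
  using assms
proof (induction ws arbitrary: x)
  case Nil then show ?case by simp
next
  case (Cons k ws)
  have "word_perm (k # ws) x = sigma k (word_perm ws x)" by simp
  then show ?case using Cons by simp
qed

lemma s_le: "k \<noteq> i \<Longrightarrow> (sigma k x \<le> i) = (x \<le> i)"
  by (auto simp: sigma_def transpose_def)
lemma s_eqS: "k \<noteq> i \<Longrightarrow> k \<noteq> Suc i \<Longrightarrow> (sigma k x = Suc i) = (x = Suc i)"
  by (auto simp: sigma_def transpose_def)
lemma s_eq: "k \<noteq> i \<Longrightarrow> Suc k \<noteq> i \<Longrightarrow> (sigma k x = i) = (x = i)"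
  by (auto simp: sigma_def transpose_def)

theorem proposition3p6:
  fixes n i :: nat and w :: "nat \<Rightarrow> nat"
  assumes "w permutes {1..n}"
    and "prism n w"
    and "i \<in> supp n w"
    and "\<forall>s. reduced_word n w s \<longrightarrow> unconfined_in i s"
    and "i - 1 \<in> supp n w"
    and "i + 1 \<in> supp n w"
  shows "contains_cal_mesh n w [4,1,2,3] (meshR \<union> meshD) {(2, i)} {(2, i)} \<or>
         contains_cal_mesh n w [2,3,4,1] (meshR \<union> meshU) {(2, i)} {(2, i)} \<or>
         contains_cal_mesh n w [3,1,4,2] (meshR \<union> meshU \<union> meshD) {(2, i)} {(2, i)} \<or>
         contains_cal_mesh n w [2,4,1,3] (meshR \<union> meshU \<union> meshD) {(2, i)} {(2, i)}"
proof -
  from assms(3) obtain s where s: "reduced_word n w s" "i \<in> set s" by (auto simp: supp_def)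
  have unc: "unconfined_in i s" using assms(4) s(1) by blast
  have cnt: "count_list s i = 1" using unc by (simp add: unconfined_in_def)
  obtain a b where ab: "s = a @ i # b" "i \<notin> set a" using split_list_first[OF s(2)] by blast
  have ib: "i \<notin> set b" using cnt ab by (simp add: count_list_0_iff[symmetric])
  have i1: "1 \<le> i - 1" using supp_cross(2)[OF assms(5)] .
  have ilt: "Suc i < n" using supp_cross(3)[OF assms(6)] by simp
  have i2: "2 \<le> i" using i1 by simp
  note t = reduced_tight[OF s(1)]
  have iwa: "is_word n a" and iwb: "is_word n b" using t(2) ab by (auto simp: is_word_def)
  define U where "U = word_perm a"
  define V where "V = word_perm b"
  have eqw: "U \<circ> (sigma i \<circ> V) = w"
    using t(3) ab by (simp add: word_perm_append U_def V_def)
  have wUV: "w x = U (sigma i (V x))" for x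
    using fun_cong[OF eqw, of x] by simp
  have Up: "U permutes {1..n}" unfolding U_def by (rule word_perm_permutes[OF iwa])
  have Vp: "V permutes {1..n}" unfolding V_def by (rule word_perm_permutes[OF iwb])
  have Vinj: "inj V" using Vp permutes_inj by blast
  have Vsurj: "surj V" using Vp permutes_surj by blast
  have Ule: "(U x \<le> i) = (x \<le> i)" for x unfolding U_def
  proof (rule word_perm_pres[where Q="\<lambda>v. v \<le> i"])
    fix k y assume "k \<in> set a" then have "k \<noteq> i" using ab(2) by blast
    then show "(sigma k y \<le> i) = (y \<le> i)" by (rule s_le)
  qed
  have Vle: "(V x \<le> i) = (x \<le> i)" for x unfolding V_def
  proof (rule word_perm_pres[where Q="\<lambda>v. v \<le> i"])
    fix k y assume "k \<in> set b" then have "k \<noteq> i" using ib by blast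
    then show "(sigma k y \<le> i) = (y \<le> i)" by (rule s_le)
  qed
  have pos: "s ! length a = i" using ab by simp
  have conf: "\<not> (j \<in> set a \<and> j \<in> set b)" if "j = Suc i \<or> j = i - 1" for j
  proof
    assume jj: "j \<in> set a \<and> j \<in> set b"
    then obtain ia where ia: "ia < length a" "a ! ia = j" by (meson in_set_conv_nth)
    obtain ib' where ib': "ib' < length b" "b ! ib' = j" using jj by (meson in_set_conv_nth)
    have s1: "s ! ia = j" using ia ab by (simp add: nth_append)
    have s2: "s ! (length a + Suc ib') = j" using ib' ab by (simp add: nth_append)
    have len: "length a + Suc ib' < length s" using ib' ab by simp
    have la: "length a < length s" using ab by simp
    have u: "\<forall>p<length s. s ! p = i \<longrightarrow>
        \<not> (\<exists>a' b'. a' < p \<and> p < b' \<and> b' < length s \<and> s ! a' = Suc i \<and> s ! b' = Suc i) \<and>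
        \<not> (\<exists>a' b'. a' < p \<and> p < b' \<and> b' < length s \<and> s ! a' = i - 1 \<and> s ! b' = i - 1)"
      using unc unfolding unconfined_in_def by (rule conjunct2)
    have u2: "\<not> (\<exists>a' b'. a' < length a \<and> length a < b' \<and> b' < length s \<and> s ! a' = Suc i \<and> s ! b' = Suc i) \<and>
        \<not> (\<exists>a' b'. a' < length a \<and> length a < b' \<and> b' < length s \<and> s ! a' = i - 1 \<and> s ! b' = i - 1)"
      using u la pos by blast
    have ex: "\<exists>a' b'. a' < length a \<and> length a < b' \<and> b' < length s \<and> s ! a' = j \<and> s ! b' = j"
      using ia(1) s1 s2 len by (intro exI[of _ ia] exI[of _ "length a + Suc ib'"]) simp
    show False using that u2 ex by blast
  qed
  define p where "p = inv V i"
  define q where "q = inv V (Suc i)"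
  have Vp': "V p = i" "V q = Suc i" unfolding p_def q_def using Vsurj by (simp_all add: surj_f_inv_f)
  have wp': "w p = U (Suc i)" "w q = U i" using Vp' wUV by (simp_all add: sigma_def)
  interpret S: ctx4 n i p q w
  proof
    show "inj w" using assms(1) permutes_inj by blast
    show "surj w" using assms(1) permutes_surj by blast
    show "\<And>x. x \<notin> {1..n} \<Longrightarrow> w x = x" by (rule permutes_not_in[OF assms(1)])
    show "2 \<le> i" by (rule i2)
    show "Suc i < n" by (rule ilt)
    show "p \<le> i" using Vle[of p] Vp' by simp
    show "i < q" using Vle[of q] Vp' by simp
    show "i < w p" using wp' Ule[of "Suc i"] by simp
    show "w q \<le> i" using wp' Ule[of i] by simp
    show "w x \<le> i" if "x \<le> i" "x \<noteq> p" for x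
    proof -
      have "V x \<le> i" using Vle that by simp
      moreover have "V x \<noteq> i"
      proof
        assume "V x = i" then have "V x = V p" using Vp' by simp
        then show False using injD[OF Vinj] that by blast
      qed
      ultimately have "sigma i (V x) = V x" by (simp add: sigma_def)
      then show ?thesis using wUV Ule \<open>V x \<le> i\<close> by simp
    qed
    show "i < w x" if "i < x" "x \<noteq> q" for x
    proof -
      have "\<not> V x \<le> i" using Vle that by simp
      moreover have "V x \<noteq> Suc i"
      proof
        assume "V x = Suc i" then have "V x = V q" using Vp' by simp
        then show False using injD[OF Vinj] that by blast
      qed
      ultimately have "sigma i (V x) = V x" by (simp add: sigma_def)
      then have "\<not> U (sigma i (V x)) \<le> i" using Ule \<open>\<not> V x \<le> i\<close> by simp
      then show ?thesis using wUV by simp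
    qed
  qed
  have c1: "q = Suc i \<or> w p = Suc i"
  proof (cases "Suc i \<in> set b")
    case False
    have "(V (Suc i) = Suc i) = (Suc i = Suc i)" unfolding V_def
    proof (rule word_perm_pres[where Q="\<lambda>v. v = Suc i"])
      fix k y assume "k \<in> set b"
      then have "k \<noteq> i" "k \<noteq> Suc i" using False ib by auto
      then show "(sigma k y = Suc i) = (y = Suc i)" by (rule s_eqS)
    qed
    then have "V (Suc i) = V q" using Vp' by simp
    then have "Suc i = q" using injD[OF Vinj] by blast
    then show ?thesis by simp
  next
    case True
    then have "Suc i \<notin> set a" using conf by blast
    have "(U (Suc i) = Suc i) = (Suc i = Suc i)" unfolding U_def
    proof (rule word_perm_pres[where Q="\<lambda>v. v = Suc i"])
      fix k y assume "k \<in> set a"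
      then have "k \<noteq> i" "k \<noteq> Suc i" using \<open>Suc i \<notin> set a\<close> ab(2) by auto
      then show "(sigma k y = Suc i) = (y = Suc i)" by (rule s_eqS)
    qed
    then show ?thesis using wp' by simp
  qed
  have c2: "p = i \<or> w q = i"
  proof (cases "i - 1 \<in> set b")
    case False
    have "(V i = i) = (i = i)" unfolding V_def
    proof (rule word_perm_pres[where Q="\<lambda>v. v = i"])
      fix k x assume "k \<in> set b"
      then have "k \<noteq> i" "Suc k \<noteq> i" using False ib i2 by auto
      then show "(sigma k x = i) = (x = i)" by (rule s_eq)
    qed
    then have "V i = V p" using Vp' by simp
    then have "i = p" using injD[OF Vinj] by blast
    then show ?thesis by simp
  next
    case True
    then have na: "i - 1 \<notin> set a" using conf by blast
    have "(U i = i) = (i = i)" unfolding U_def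
    proof (rule word_perm_pres[where Q="\<lambda>v. v = i"])
      fix k x assume "k \<in> set a"
      then have "k \<noteq> i" "Suc k \<noteq> i" using na ab(2) i2 by auto
      then show "(sigma k x = i) = (x = i)" by (rule s_eq)
    qed
    then show ?thesis using wp' by simp
  qed
  show ?thesis
  proof (rule S.main4[OF c1 c2])
    show "cross (Suc i) w" using supp_cross(1)[OF assms(6)] by simp
    show "cross (i - 1) w" using supp_cross(1)[OF assms(5)] .
  qed
qed

end
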